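(* Fix a node $u$ with $d_u\ge 1$ neighbors, let $\eta>0$, $\alpha>0$, $\rho\in(0,1)$, and let $\Theta$ be a finite set of models, each $\theta\in\Theta$ determining embeddings with $\|\mathrm{E}_w\|_2=1$ for every node $w$. For $\theta\in\Theta$ and $v\in\mathcal{N}(u)$ let $h(u,v;\theta)=\mathrm{E}_u^\top\mathrm{E}_u+d_u\,g(u,v;\theta)$, let $P_{u,\theta}^*(v)=P_u(v)\exp(g(u,v;\theta)/\alpha)/\mathbb{E}_{w\sim P_u}[\exp(g(u,w;\theta)/\alpha)]$, and assume that for every $\theta\in\Theta$, $P^*_{u,\theta}$ maximizes $\mathbb{E}_{v\sim P}[h(u,v;\theta)]$ over all distributions $P$ on $\mathcal{N}(u)$ with $D_{KL}(P,P_u)\le\eta$ (i.e. $\alpha$ is the optimal Lagrange multiplier of the constraint). Put $\mathcal{L}_{DRO\_smooth}(u;\theta)=\mathbb{E}_{v\sim P^*_{u,\theta}}[h(u,v;\theta)]$. Let $P_u^{ideal}$ be a distribution on $\mathcal{N}(u)$ with $D_{KL}(P_u^{ideal},P_u)\le\eta$ and $\mathcal{L}_{ideal}(u;\theta)=\mathbb{E}_{v\sim P_u^{ideal}}[h(u,v;\theta)]$. Let $X_1,\dots,X_{d_u}$ be independent random variables and for each $\theta\in\Theta$ let $\widetilde{\mathcal{L}}_{DRO\_smooth}(u;\theta)=f_\theta(X_1,\dots,X_{d_u})$ be an estimator with $\mathbb{E}[f_\theta(X_1,\dots,X_{d_u})]=\mathcal{L}_{DRO\_smooth}(u;\theta)$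 such that changing any single coordinate $X_i$ changes $f_\theta$ by at most $\max_{v\in\mathcal{N}(u)}P^*_{u,\theta}(v)\,|h(u,v;\theta)|$. Then with probability at least $1-\rho$, simultaneously for all $\theta\in\Theta$, $$\mathcal{L}_{ideal}(u;\theta)\le\widetilde{\mathcal{L}}_{DRO\_smooth}(u;\theta)+\mathcal{B}(\alpha,d_u,\rho),\qquad \mathcal{B}(\alpha,d_u,\rho)=\frac{(d_u+\sqrt{d_u})\,e^{2\sqrt{d_u}/\alpha}}{d_u-1+e^{2\sqrt{d_u}/\alpha}}\sqrt{\frac12\log\frac{|\Theta|}{\rho}}.$$
   Context: Setting: a user–item bipartite graph in which every node has degree at least 1; $\mathcal{N}(u)$ is the neighbor set of $u$, $d_u=|\mathcal{N}(u)|$, $d_v$ the degree of $v$, and $P_u$ is the uniform distribution on $\mathcal{N}(u)$. $g(u,v;\theta)=-\frac{\mathrm{E}_u^\top\mathrm{E}_v}{\sqrt{d_u}\sqrt{d_v}}$, where $\mathrm{E}_w\in\mathbb{R}^c$ is the embedding of node $w$ under model $\theta$. $D_{KL}(P,Q)=\sum_v P(v)\log\frac{P(v)}{Q(v)}$. *)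

theory Defs
  imports "HOL-Probability.Probability"
begin

definition nbrs :: "('n \<times> 'n) set \<Rightarrow> 'n \<Rightarrow> 'n set" where
  "nbrs G w = {v. (w, v) \<in> G}"

definition deg :: "('n \<times> 'n) set \<Rightarrow> 'n \<Rightarrow> nat" where
  "deg G w = card (nbrs G w)"

definition bipartite_graph :: "('n \<times> 'n) set \<Rightarrow> bool" where
  "bipartite_graph G \<longleftrightarrow> sym G
     \<and> (\<forall>w. finite (nbrs G w) \<and> deg G w \<ge> 1)
     \<and> (\<exists>side :: 'n \<Rightarrow> bool. \<forall>(a, b) \<in> G. side a \<noteq> side b)"

definition gfun :: "('n \<times> 'n) set \<Rightarrow> ('n \<Rightarrow> real ^ 'c) \<Rightarrow> 'n \<Rightarrow> 'n \<Rightarrow> real" where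
  "gfun G E u v = - (E u \<bullet> E v) / (sqrt (real (deg G u)) * sqrt (real (deg G v)))"

definition hfun :: "('n \<times> 'n) set \<Rightarrow> ('n \<Rightarrow> real ^ 'c) \<Rightarrow> 'n \<Rightarrow> 'n \<Rightarrow> real" where
  "hfun G E u v = E u \<bullet> E u + real (deg G u) * gfun G E u v"

definition unif_nbr :: "('n \<times> 'n) set \<Rightarrow> 'n \<Rightarrow> 'n \<Rightarrow> real" where
  "unif_nbr G u v = 1 / real (deg G u)"

definition is_dist :: "'n set \<Rightarrow> ('n \<Rightarrow> real) \<Rightarrow> bool" where
  "is_dist A P \<longleftrightarrow> (\<forall>v\<in>A. 0 \<le> P v) \<and> (\<Sum>v\<in>A. P v) = 1"

text \<open>KL divergence (natural log; 0 log 0 = 0 holds automatically since 0 * x = 0).\<close>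
definition KL :: "'n set \<Rightarrow> ('n \<Rightarrow> real) \<Rightarrow> ('n \<Rightarrow> real) \<Rightarrow> real" where
  "KL A P Q = (\<Sum>v\<in>A. P v * ln (P v / Q v))"

definition expect_on :: "'n set \<Rightarrow> ('n \<Rightarrow> real) \<Rightarrow> ('n \<Rightarrow> real) \<Rightarrow> real" where
  "expect_on A P h = (\<Sum>v\<in>A. P v * h v)"

definition Pstar :: "('n \<times> 'n) set \<Rightarrow> ('n \<Rightarrow> real ^ 'c) \<Rightarrow> real \<Rightarrow> 'n \<Rightarrow> 'n \<Rightarrow> real" where
  "Pstar G E \<alpha> u v = unif_nbr G u v * exp (gfun G E u v / \<alpha>)
     / expect_on (nbrs G u) (unif_nbr G u) (\<lambda>w. exp (gfun G E u w / \<alpha>))"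

definition kl_ball_maximizer ::
  "'n set \<Rightarrow> ('n \<Rightarrow> real) \<Rightarrow> real \<Rightarrow> ('n \<Rightarrow> real) \<Rightarrow> ('n \<Rightarrow> real) \<Rightarrow> bool" where
  "kl_ball_maximizer A P0 \<eta> h Q \<longleftrightarrow>
     is_dist A Q \<and> KL A Q P0 \<le> \<eta> \<and>
     (\<forall>P. is_dist A P \<and> KL A P P0 \<le> \<eta> \<longrightarrow> expect_on A P h \<le> expect_on A Q h)"

definition L_DRO_smooth :: "('n \<times> 'n) set \<Rightarrow> ('n \<Rightarrow> real ^ 'c) \<Rightarrow> real \<Rightarrow> 'n \<Rightarrow> real" where
  "L_DRO_smooth G E \<alpha> u = expect_on (nbrs G u) (Pstar G E \<alpha> u) (hfun G E u)"

definition L_ideal :: "('n \<times> 'n) set \<Rightarrow> ('n \<Rightarrow> real ^ 'c) \<Rightarrow> ('n \<Rightarrow> real) \<Rightarrow> 'n \<Rightarrow> real" where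
  "L_ideal G E Pid u = expect_on (nbrs G u) Pid (hfun G E u)"

text \<open>The bound B(alpha, d_u, rho) with |Theta| = k.\<close>
definition dro_bound :: "real \<Rightarrow> nat \<Rightarrow> real \<Rightarrow> nat \<Rightarrow> real" where
  "dro_bound \<alpha> d \<rho> k =
     (real d + sqrt (real d)) * exp (2 * sqrt (real d) / \<alpha>)
       / (real d - 1 + exp (2 * sqrt (real d) / \<alpha>))
     * sqrt (1/2 * ln (real k / \<rho>))"

end

theory Submission
  imports Defs
begin


definition bdd_diff :: "nat \<Rightarrow> (nat \<Rightarrow> 'b set) \<Rightarrow> ((nat \<Rightarrow> 'b) \<Rightarrow> real) \<Rightarrow> real \<Rightarrow> bool" where
  "bdd_diff n A f C \<longleftrightarrow> (\<forall>x\<in>PiE {..<n} A. \<forall>y\<in>PiE {..<n} A. \<forall>i<n.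
      (\<forall>j\<in>{..<n}-{i}. x j = y j) \<longrightarrow> \<bar>f x - f y\<bar> \<le> C)"

lemma bd_chain:
  assumes bd: "bdd_diff n A f C"
    and x: "x \<in> PiE {..<n} A" and y: "y \<in> PiE {..<n} A"
  shows "\<bar>f x - f y\<bar> \<le> real n * C"
proof -
  define z where "z k = restrict (\<lambda>i. if i < k then y i else x i) {..<n}" for k
  have zin: "z k \<in> PiE {..<n} A" for k using x y by (auto simp: z_def PiE_iff)
  have z0: "z 0 = x" using x by (auto simp: z_def fun_eq_iff PiE_iff extensional_def)
  have zn: "z n = y" using y by (auto simp: z_def fun_eq_iff PiE_iff extensional_def)
  have "k \<le> n \<Longrightarrow> \<bar>f x - f (z k)\<bar> \<le> real k * C" for k
  proof (induction k)
    case 0 then show ?case by (simp add: z0)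
  next
    case (Suc k)
    have "\<bar>f (z k) - f (z (Suc k))\<bar> \<le> C"
    proof -
      have "\<forall>j\<in>{..<n}-{k}. z k j = z (Suc k) j" by (auto simp: z_def)
      moreover have "k < n" using Suc.prems by simp
      ultimately show ?thesis using bd zin unfolding bdd_diff_def by blast
    qed
    with Suc show ?case by (simp add: algebra_simps)
  qed
  from this[of n] show ?thesis by (simp add: zn)
qed

lemma bd_integrable:
  assumes N: "\<And>i. prob_space (N i)"
    and fm: "f \<in> borel_measurable (PiM {..<n} N)"
    and bd: "bdd_diff n (\<lambda>i. space (N i)) f C"
  shows "integrable (PiM {..<n} N) f"
proof -
  interpret P: prob_space "PiM {..<n} N" by (intro prob_space_PiM N)
  obtain x0 where x0: "x0 \<in> space (PiM {..<n} N)" using P.not_empty by blast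
  show ?thesis
  proof (rule P.integrable_const_bound[where B="\<bar>f x0\<bar> + real n * C"])
    show "AE x in PiM {..<n} N. norm (f x) \<le> \<bar>f x0\<bar> + real n * C"
    proof (rule AE_I2)
      fix x assume "x \<in> space (PiM {..<n} N)"
      then have "\<bar>f x - f x0\<bar> \<le> real n * C" using bd_chain[OF bd] x0 by (simp add: space_PiM)
      then show "norm (f x) \<le> \<bar>f x0\<bar> + real n * C" by simp
    qed
  qed (fact fm)
qed

lemma psf: assumes N: "\<And>i. prob_space (N i)" shows "product_sigma_finite N"
  unfolding product_sigma_finite_def using N prob_space_imp_sigma_finite by auto

lemma mcd_nn:
  assumes N: "\<And>i. prob_space (N i)" and l: "l > 0"
  shows "f \<in> borel_measurable (PiM {..<n} N) \<Longrightarrow> bdd_diff n (\<lambda>i. space (N i)) f C \<Longrightarrow>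
    (\<integral>\<^sup>+x. ennreal (exp (l * (f x - (\<integral>x. f x \<partial>PiM {..<n} N)))) \<partial>PiM {..<n} N)
      \<le> ennreal (exp (l\<^sup>2 * real n * C\<^sup>2 / 8))"
proof (induction n arbitrary: f)
  case 0
  interpret P: prob_space "PiM ({}::nat set) N" by (intro prob_space_PiM N)
  have sp: "space (PiM {..<0::nat} N) = {\<lambda>k. undefined}" by (simp add: space_PiM_empty)
  have "(\<integral>x. f x \<partial>PiM {..<0} N) = (\<integral>x. f (\<lambda>k. undefined) \<partial>PiM {..<0} N)"
    by (rule Bochner_Integration.integral_cong) (auto simp: space_PiM_empty)
  also have "\<dots> = f (\<lambda>k. undefined)" by (simp add: P.prob_space)
  finally have E: "(\<integral>x. f x \<partial>PiM {..<0} N) = f (\<lambda>k. undefined)" .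
  have "(\<integral>\<^sup>+x. ennreal (exp (l * (f x - (\<integral>x. f x \<partial>PiM {..<0} N)))) \<partial>PiM {..<0} N)
      = (\<integral>\<^sup>+x. 1 \<partial>PiM {..<0} N)"
    by (rule nn_integral_cong) (auto simp: space_PiM_empty E[simplified])
  also have "\<dots> = 1" by (simp add: P.emeasure_space_1)
  finally show ?case by simp
next
  case (Suc n)
  note fm = Suc.prems(1)
  have fm': "f \<in> borel_measurable (PiM (insert n {..<n}) N)" using fm by (simp add: lessThan_Suc)
  have PS: "product_sigma_finite N" by (rule psf[OF N])
  interpret NN: prob_space "N n" by (rule N)
  interpret P: prob_space "PiM {..<n} N" by (intro prob_space_PiM N)
  interpret P': prob_space "PiM {..<Suc n} N" by (intro prob_space_PiM N)
  define h where "h x y = f (x(n:=y))" for x y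
  define g where "g x = (\<integral>y. h x y \<partial>N n)" for x
  have upd_in: "x(n:=y) \<in> PiE {..<Suc n} (\<lambda>i. space (N i))"
    if "x \<in> space (PiM {..<n} N)" "y \<in> space (N n)" for x y
    using that by (auto simp: space_PiM PiE_iff extensional_def)
  have hm: "h x \<in> borel_measurable (N n)" if x: "x \<in> space (PiM {..<n} N)" for x
  proof -
    have "h x = f \<circ> fun_upd x n" by (simp add: h_def fun_eq_iff)
    moreover have "f \<circ> fun_upd x n \<in> borel_measurable (N n)"
      by (rule measurable_comp[OF measurable_component_update[OF x] fm']) simp
    ultimately show ?thesis by simp
  qed
  have hdiff: "\<bar>h x y - h x y'\<bar> \<le> C"
    if x: "x \<in> space (PiM {..<n} N)" and y: "y \<in> space (N n)" "y' \<in> space (N n)" for x y y'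
  proof -
    have "\<forall>j\<in>{..<Suc n}-{n}. (x(n:=y)) j = (x(n:=y')) j" by auto
    then show ?thesis using Suc.prems(2) upd_in[OF x y(1)] upd_in[OF x y(2)]
      unfolding bdd_diff_def h_def by blast
  qed
  obtain y0 where y0: "y0 \<in> space (N n)" using NN.not_empty by blast
  have hint: "integrable (N n) (h x)" if x: "x \<in> space (PiM {..<n} N)" for x
  proof (rule NN.integrable_const_bound[where B="\<bar>h x y0\<bar> + C"])
    show "AE y in N n. norm (h x y) \<le> \<bar>h x y0\<bar> + C"
      using hdiff[OF x _ y0] by (intro AE_I2) force
  qed (rule hm[OF x])
  have gm: "g \<in> borel_measurable (PiM {..<n} N)"
  proof -
    have "case_prod h = f \<circ> (\<lambda>(x,y). x(n:=y))" by (auto simp: fun_eq_iff h_def)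
    moreover have "f \<circ> (\<lambda>(x,y). x(n:=y)) \<in> borel_measurable (PiM {..<n} N \<Otimes>\<^sub>M N n)"
      by (rule measurable_comp[OF measurable_add_dim fm'])
    ultimately have "case_prod h \<in> borel_measurable (PiM {..<n} N \<Otimes>\<^sub>M N n)"
      by simp
    then show ?thesis unfolding g_def by (rule NN.borel_measurable_lebesgue_integral)
  qed
  have gbd: "bdd_diff n (\<lambda>i. space (N i)) g C"
    unfolding bdd_diff_def
  proof (intro ballI allI impI)
    fix x x' i assume x: "x \<in> PiE {..<n} (\<lambda>i. space (N i))" and x': "x' \<in> PiE {..<n} (\<lambda>i. space (N i))"
      and i: "i < n" and eq: "\<forall>j\<in>{..<n}-{i}. x j = x' j"
    have xs: "x \<in> space (PiM {..<n} N)" "x' \<in> space (PiM {..<n} N)" using x x' by (simp_all add: space_PiM)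
    have hh: "\<bar>h x y - h x' y\<bar> \<le> C" if y: "y \<in> space (N n)" for y
    proof -
      have "\<forall>j\<in>{..<Suc n}-{i}. (x(n:=y)) j = (x'(n:=y)) j" using eq by auto
      moreover have "i < Suc n" using i by simp
      ultimately show ?thesis using Suc.prems(2) upd_in[OF xs(1) y] upd_in[OF xs(2) y]
        unfolding bdd_diff_def h_def by blast
    qed
    have hA: "h x y \<le> h x' y + C" "h x' y \<le> h x y + C" if "y \<in> space (N n)" for y
      using hh[OF that] by (auto simp: abs_le_iff)
    have "g x \<le> (\<integral>y. h x' y + C \<partial>N n)" unfolding g_def
      using hint[OF xs(1)] hint[OF xs(2)] by (intro integral_mono) (auto intro: hA)
    also have "\<dots> = g x' + C" using hint[OF xs(2)] by (simp add: g_def NN.prob_space)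
    finally have 1: "g x \<le> g x' + C" .
    have "g x' \<le> (\<integral>y. h x y + C \<partial>N n)" unfolding g_def
      using hint[OF xs(1)] hint[OF xs(2)] by (intro integral_mono) (auto intro: hA)
    also have "\<dots> = g x + C" using hint[OF xs(1)] by (simp add: g_def NN.prob_space)
    finally have 2: "g x' \<le> g x + C" .
    from 1 2 show "\<bar>g x - g x'\<bar> \<le> C" by linarith
  qed
  have fint: "integrable (PiM (insert n {..<n}) N) f"
    using bd_integrable[OF N fm Suc.prems(2)] by (simp add: lessThan_Suc)
  have Ef: "(\<integral>z. f z \<partial>PiM {..<Suc n} N) = (\<integral>x. g x \<partial>PiM {..<n} N)"
    using product_sigma_finite.product_integral_insert[OF PS _ _ fint]
    by (simp add: lessThan_Suc g_def h_def)
  define Eg where "Eg = (\<integral>x. g x \<partial>PiM {..<n} N)"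
  have hoeff: "(\<integral>\<^sup>+y. ennreal (exp (l * (h x y - g x))) \<partial>N n) \<le> ennreal (exp (l\<^sup>2 * C\<^sup>2 / 8))"
    if x: "x \<in> space (PiM {..<n} N)" for x
  proof -
    define a where "a = (INF y\<in>space (N n). h x y)"
    have bb: "bdd_below (h x ` space (N n))"
      using hdiff[OF x _ y0] by (intro bdd_belowI[where m="h x y0 - C"]) (force simp: abs_le_iff)
    have "interval_bounded_random_variable (N n) (h x) a (a + C)"
    proof (intro interval_bounded_random_variable.intro interval_bounded_random_variable_axioms.intro N)
      show "h x \<in> measurable (N n) borel" using hm[OF x] by simp
      show "AE y in N n. h x y \<in> {a..a + C}"
      proof (rule AE_I2)
        fix y assume y: "y \<in> space (N n)"
        have "a \<le> h x y" unfolding a_def using bb y by (intro cInf_lower) auto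
        moreover have "h x y - C \<le> a" unfolding a_def
        proof (rule cInf_greatest)
          show "h x ` space (N n) \<noteq> {}" using NN.not_empty by auto
          fix v assume "v \<in> h x ` space (N n)"
          then obtain y' where y': "y' \<in> space (N n)" "v = h x y'" by auto
          show "h x y - C \<le> v" using hdiff[OF x y y'(1)] y'(2) by (simp add: abs_le_iff)
        qed
        ultimately show "h x y \<in> {a..a + C}" by simp
      qed
    qed
    from interval_bounded_random_variable.Hoeffdings_lemma_nn_integral[OF this l]
    show ?thesis by (simp add: g_def NN.prob_space)
  qed
  have "(\<integral>\<^sup>+z. ennreal (exp (l * (f z - (\<integral>z. f z \<partial>PiM {..<Suc n} N)))) \<partial>PiM {..<Suc n} N)
      = (\<integral>\<^sup>+z. ennreal (exp (l * (f z - Eg))) \<partial>PiM (insert n {..<n}) N)"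
    using Ef by (simp add: Eg_def lessThan_Suc)
  also have "\<dots> = (\<integral>\<^sup>+x. (\<integral>\<^sup>+y. ennreal (exp (l * (f (x(n:=y)) - Eg))) \<partial>N n) \<partial>PiM {..<n} N)"
    by (rule product_sigma_finite.product_nn_integral_insert[OF PS]) (use fm' in auto)
  also have "\<dots> = (\<integral>\<^sup>+x. ennreal (exp (l * (g x - Eg))) * (\<integral>\<^sup>+y. ennreal (exp (l * (h x y - g x))) \<partial>N n) \<partial>PiM {..<n} N)"
  proof (rule nn_integral_cong)
    fix x assume x: "x \<in> space (PiM {..<n} N)"
    have "(\<integral>\<^sup>+y. ennreal (exp (l * (f (x(n:=y)) - Eg))) \<partial>N n)
       = (\<integral>\<^sup>+y. ennreal (exp (l * (g x - Eg))) * ennreal (exp (l * (h x y - g x))) \<partial>N n)"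
      by (rule nn_integral_cong) (simp add: h_def flip: ennreal_mult exp_add, simp add: algebra_simps)
    also have "\<dots> = ennreal (exp (l * (g x - Eg))) * (\<integral>\<^sup>+y. ennreal (exp (l * (h x y - g x))) \<partial>N n)"
      by (rule nn_integral_cmult) (use hm[OF x] in auto)
    finally show "(\<integral>\<^sup>+y. ennreal (exp (l * (f (x(n:=y)) - Eg))) \<partial>N n)
       = ennreal (exp (l * (g x - Eg))) * (\<integral>\<^sup>+y. ennreal (exp (l * (h x y - g x))) \<partial>N n)" .
  qed
  also have "\<dots> \<le> (\<integral>\<^sup>+x. ennreal (exp (l * (g x - Eg))) * ennreal (exp (l\<^sup>2 * C\<^sup>2 / 8)) \<partial>PiM {..<n} N)"
    by (intro nn_integral_mono mult_left_mono hoeff) auto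
  also have "\<dots> = (\<integral>\<^sup>+x. ennreal (exp (l * (g x - Eg))) \<partial>PiM {..<n} N) * ennreal (exp (l\<^sup>2 * C\<^sup>2 / 8))"
    by (rule nn_integral_multc) (use gm in auto)
  also have "\<dots> \<le> ennreal (exp (l\<^sup>2 * real n * C\<^sup>2 / 8)) * ennreal (exp (l\<^sup>2 * C\<^sup>2 / 8))"
    by (intro mult_right_mono) (use Suc.IH[OF gm gbd] in \<open>auto simp: Eg_def\<close>)
  also have "\<dots> = ennreal (exp (l\<^sup>2 * real (Suc n) * C\<^sup>2 / 8))"
    by (simp flip: ennreal_mult exp_add add: algebra_simps)
  finally show ?case .
qed

lemma mcd_tail:
  assumes N: "\<And>i. prob_space (N i)"
    and fm: "f \<in> borel_measurable (PiM {..<n} N)"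
    and bd: "bdd_diff n (\<lambda>i. space (N i)) f C"
    and t: "t > 0" and n: "n > 0" and C: "C > 0"
  shows "measure (PiM {..<n} N) {x \<in> space (PiM {..<n} N). f x \<le> (\<integral>x. f x \<partial>PiM {..<n} N) - t}
           \<le> exp (-2 * t\<^sup>2 / (real n * C\<^sup>2))"
proof -
  interpret P: prob_space "PiM {..<n} N" by (intro prob_space_PiM N)
  define E where "E = (\<integral>x. f x \<partial>PiM {..<n} N)"
  define d where "d = real n * C\<^sup>2"
  have d: "d > 0" using n C by (simp add: d_def)
  define l where "l = 4 * t / d"
  have l: "l > 0" using t d by (simp add: l_def)
  have fm': "(\<lambda>x. - f x) \<in> borel_measurable (PiM {..<n} N)" using fm by simp
  have bd': "bdd_diff n (\<lambda>i. space (N i)) (\<lambda>x. - f x) C"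
    using bd unfolding bdd_diff_def by (metis abs_minus_commute minus_diff_eq minus_diff_minus)
  have Em: "(\<integral>x. - f x \<partial>PiM {..<n} N) = - E" by (simp add: E_def)
  have set_eq: "{x \<in> space (PiM {..<n} N). f x \<le> E - t}
      = {x \<in> space (PiM {..<n} N). (- f x - (- E)) \<ge> t}" by auto
  have "ennreal (measure (PiM {..<n} N) {x \<in> space (PiM {..<n} N). f x \<le> E - t})
     = emeasure (PiM {..<n} N) {x \<in> space (PiM {..<n} N). (- f x - (- E)) \<ge> t}"
    by (simp add: set_eq P.emeasure_eq_measure)
  also have "\<dots> \<le> ennreal (exp (-l * t)) *
      (\<integral>\<^sup>+x. ennreal (exp (l * (- f x - (- E)))) * indicator (space (PiM {..<n} N)) x \<partial>PiM {..<n} N)"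
    by (intro Chernoff_ineq_nn_integral_ge l) (use fm in auto)
  also have "(\<integral>\<^sup>+x. ennreal (exp (l * (- f x - (- E)))) * indicator (space (PiM {..<n} N)) x \<partial>PiM {..<n} N)
      = (\<integral>\<^sup>+x. ennreal (exp (l * (- f x - (\<integral>x. - f x \<partial>PiM {..<n} N)))) \<partial>PiM {..<n} N)"
    by (rule nn_integral_cong) (simp add: E_def)
  also have "ennreal (exp (-l * t)) * \<dots> \<le> ennreal (exp (-l * t)) * ennreal (exp (l\<^sup>2 * real n * C\<^sup>2 / 8))"
    by (intro mult_left_mono mcd_nn[OF N l fm' bd']) auto
  also have "\<dots> = ennreal (exp (d * l\<^sup>2 / 8 - l * t))"
    by (simp flip: ennreal_mult exp_add add: d_def algebra_simps)
  also have "d * l\<^sup>2 / 8 - l * t = -2 * t\<^sup>2 / d"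
    using d by (simp add: l_def field_simps power2_eq_square)
  finally show ?thesis
    by (subst (asm) ennreal_le_iff) (simp_all add: d_def E_def)
qed



lemma g_abs_bound:
  assumes "norm (E u) = 1" "norm (E v) = 1" "deg G u \<ge> 1" "deg G v \<ge> 1"
  shows "\<bar>gfun G E u v\<bar> \<le> 1 / sqrt (real (deg G u))"
proof -
  have cs: "\<bar>E u \<bullet> E v\<bar> \<le> 1" using Cauchy_Schwarz_ineq2[of "E u" "E v"] assms by simp
  have du: "sqrt (real (deg G u)) \<ge> 1" and dv: "sqrt (real (deg G v)) \<ge> 1" using assms by auto
  have "\<bar>gfun G E u v\<bar> = \<bar>E u \<bullet> E v\<bar> / (sqrt (real (deg G u)) * sqrt (real (deg G v)))"
    by (simp add: gfun_def abs_mult)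
  also have "\<dots> \<le> 1 / (sqrt (real (deg G u)) * 1)"
    using cs du dv by (intro frac_le mult_left_mono) auto
  finally show ?thesis by simp
qed

lemma h_abs_bound:
  assumes "norm (E u) = 1" "norm (E v) = 1" "deg G u \<ge> 1" "deg G v \<ge> 1"
  shows "\<bar>hfun G E u v\<bar> \<le> 1 + sqrt (real (deg G u))"
proof -
  have uu: "E u \<bullet> E u = 1" using assms(1) by (simp flip: power2_norm_eq_inner)
  have d: "real (deg G u) > 0" using assms by simp
  have "\<bar>real (deg G u) * gfun G E u v\<bar> \<le> real (deg G u) * (1 / sqrt (real (deg G u)))"
  proof -
    have "\<bar>real (deg G u) * gfun G E u v\<bar> = real (deg G u) * \<bar>gfun G E u v\<bar>" by (simp add: abs_mult)
    also have "\<dots> \<le> real (deg G u) * (1 / sqrt (real (deg G u)))"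
      using g_abs_bound[OF assms] d by (intro mult_left_mono) auto
    finally show ?thesis .
  qed
  also have "\<dots> = sqrt (real (deg G u))" using d
    by (simp add: real_div_sqrt)
  finally show ?thesis unfolding hfun_def uu by linarith
qed

lemma pstar_bound:
  assumes fin: "finite (nbrs G u)" and v: "v \<in> nbrs G u" and alpha: "\<alpha> > 0"
    and du: "deg G u \<ge> 1"
    and gb: "\<And>w. w \<in> nbrs G u \<Longrightarrow> \<bar>gfun G E u w\<bar> \<le> 1"
  shows "Pstar G E \<alpha> u v \<le> exp (2 * sqrt (real (deg G u)) / \<alpha>)
            / (real (deg G u) - 1 + exp (2 * sqrt (real (deg G u)) / \<alpha>))"
proof -
  define d where "d = deg G u"
  define e where "e = exp (2 * sqrt (real d) / \<alpha>)"
  define a where "a w = exp (gfun G E u w / \<alpha>)" for w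
  have dpos: "real d > 0" using du by (simp add: d_def)
  have card: "card (nbrs G u) = d" by (simp add: d_def deg_def)
  have epos: "e > 0" by (simp add: e_def)
  have apos: "a w > 0" for w by (simp add: a_def)
  have sq1: "sqrt (real d) \<ge> 1" using du by (simp add: d_def)
  have low: "a v / e \<le> a w" if w: "w \<in> nbrs G u" for w
  proof -
    have "gfun G E u v - gfun G E u w \<le> 2"
      using gb[OF v] gb[OF w] by (auto simp: abs_le_iff)
    then have "gfun G E u v - gfun G E u w \<le> 2 * sqrt (real d)"
      using sq1 by linarith
    then have "(gfun G E u v - 2 * sqrt (real d)) / \<alpha> \<le> gfun G E u w / \<alpha>"
      using alpha by (intro divide_right_mono) auto
    then have "gfun G E u v / \<alpha> - 2 * sqrt (real d) / \<alpha> \<le> gfun G E u w / \<alpha>"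
      by (simp add: diff_divide_distrib)
    then have "exp (gfun G E u v / \<alpha> - 2 * sqrt (real d) / \<alpha>) \<le> a w"
      by (simp add: a_def)
    then show ?thesis by (simp add: exp_diff a_def e_def)
  qed
  have "real (card (nbrs G u - {v})) * (a v / e) \<le> (\<Sum>w\<in>nbrs G u - {v}. a w)"
    by (rule sum_bounded_below) (use low in auto)
  moreover have "card (nbrs G u - {v}) = d - 1" using card fin v by simp
  ultimately have rest: "(real d - 1) * (a v / e) \<le> (\<Sum>w\<in>nbrs G u - {v}. a w)"
    using du by (simp add: d_def of_nat_diff)
  have S: "(\<Sum>w\<in>nbrs G u. a w) = a v + (\<Sum>w\<in>nbrs G u - {v}. a w)"
    by (rule sum.remove[OF fin v])
  have Spos: "(\<Sum>w\<in>nbrs G u. a w) > 0"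
  proof -
    have "(real d - 1) * (a v / e) \<ge> 0" using du apos[of v] epos
      by (intro mult_nonneg_nonneg) (auto simp: d_def)
    then show ?thesis using S rest apos[of v] by linarith
  qed
  have P: "Pstar G E \<alpha> u v = a v / (\<Sum>w\<in>nbrs G u. a w)"
    using dpos by (simp add: Pstar_def unif_nbr_def expect_on_def a_def d_def flip: sum_divide_distrib)
  have "a v / (\<Sum>w\<in>nbrs G u. a w) \<le> e / (real d - 1 + e)"
  proof -
    have den: "real d - 1 + e > 0" using dpos du epos by (simp add: d_def)
    have "a v * (real d - 1 + e) \<le> e * (\<Sum>w\<in>nbrs G u. a w)"
    proof -
      have "(real d - 1) * a v = e * ((real d - 1) * (a v / e))" using epos by simp
      also have "\<dots> \<le> e * (\<Sum>w\<in>nbrs G u - {v}. a w)" using rest epos by (intro mult_left_mono) auto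
      finally show ?thesis using S by (simp add: algebra_simps)
    qed
    then show ?thesis using den Spos by (simp add: divide_simps mult.commute)
  qed
  then show ?thesis using P by (simp add: e_def d_def)
qed

theorem theorem2:
  fixes G :: "('n \<times> 'n) set" and u :: 'n
    and Emb :: "'m \<Rightarrow> 'n \<Rightarrow> real ^ 'c" and \<Theta> :: "'m set"
    and \<eta> \<alpha> \<rho> :: real and Pid :: "'n \<Rightarrow> real"
    and M :: "'a measure" and S :: "'b measure"
    and X :: "nat \<Rightarrow> 'a \<Rightarrow> 'b" and f :: "'m \<Rightarrow> (nat \<Rightarrow> 'b) \<Rightarrow> real"
  assumes graph: "bipartite_graph G"
    and eta: "\<eta> > 0" and alpha: "\<alpha> > 0" and rho: "0 < \<rho>" "\<rho> < 1"
    and fin: "finite \<Theta>"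
    and unit: "\<forall>\<theta>\<in>\<Theta>. \<forall>w. norm (Emb \<theta> w) = 1"
    and opt: "\<forall>\<theta>\<in>\<Theta>. kl_ball_maximizer (nbrs G u) (unif_nbr G u) \<eta>
                        (hfun G (Emb \<theta>) u) (Pstar G (Emb \<theta>) \<alpha> u)"
    and ideal: "is_dist (nbrs G u) Pid" "KL (nbrs G u) Pid (unif_nbr G u) \<le> \<eta>"
    and M: "prob_space M"
    and indep: "prob_space.indep_vars M (\<lambda>_. S) X {..<deg G u}"
    and meas: "\<forall>\<theta>\<in>\<Theta>. f \<theta> \<in> borel_measurable (PiM {..<deg G u} (\<lambda>_. S))"
    and unbiased: "\<forall>\<theta>\<in>\<Theta>. prob_space.expectation M
                      (\<lambda>\<omega>. f \<theta> (restrict (\<lambda>i. X i \<omega>) {..<deg G u}))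
                    = L_DRO_smooth G (Emb \<theta>) \<alpha> u"
    and bdiff: "\<forall>\<theta>\<in>\<Theta>. \<forall>x \<in> PiE {..<deg G u} (\<lambda>_. space S).
                  \<forall>y \<in> PiE {..<deg G u} (\<lambda>_. space S). \<forall>i < deg G u.
                    (\<forall>j \<in> {..<deg G u} - {i}. x j = y j) \<longrightarrow>
                    \<bar>f \<theta> x - f \<theta> y\<bar>
                      \<le> Max ((\<lambda>v. Pstar G (Emb \<theta>) \<alpha> u v * \<bar>hfun G (Emb \<theta>) u v\<bar>) ` nbrs G u)"
  shows "prob_space.prob M
           {\<omega> \<in> space M. \<forall>\<theta>\<in>\<Theta>.
              L_ideal G (Emb \<theta>) Pid u
                \<le> f \<theta> (restrict (\<lambda>i. X i \<omega>) {..<deg G u})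
                   + dro_bound \<alpha> (deg G u) \<rho> (card \<Theta>)}
         \<ge> 1 - \<rho>"
proof -
  interpret M: prob_space M by (rule M)
  define d where "d = deg G u"
  have finA: "finite (nbrs G u)" and degs: "\<And>w. deg G w \<ge> 1"
    using graph unfolding bipartite_graph_def by auto
  have d1: "d \<ge> 1" using degs by (simp add: d_def)
  have Ane: "nbrs G u \<noteq> {}" using d1 by (auto simp: d_def deg_def)
  define e where "e = exp (2 * sqrt (real d) / \<alpha>)"
  define C where "C = e / (real d - 1 + e) * (1 + sqrt (real d))"
  have epos: "e > 0" by (simp add: e_def)
  have den: "real d - 1 + e > 0" using epos d1 by simp
  have Cpos: "C > 0" unfolding C_def using epos den
    by (intro mult_pos_pos divide_pos_pos) (auto simp: add_pos_nonneg)
  define k where "k = card \<Theta>"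
  define B where "B = dro_bound \<alpha> d \<rho> k"
  define Y where "Y \<omega> = restrict (\<lambda>i. X i \<omega>) {..<d}" for \<omega>
  let ?good = "{\<omega> \<in> space M. \<forall>\<theta>\<in>\<Theta>. L_ideal G (Emb \<theta>) Pid u \<le> f \<theta> (Y \<omega>) + B}"
  have goal_eq: "{\<omega> \<in> space M. \<forall>\<theta>\<in>\<Theta>.
              L_ideal G (Emb \<theta>) Pid u
                \<le> f \<theta> (restrict (\<lambda>i. X i \<omega>) {..<deg G u})
                   + dro_bound \<alpha> (deg G u) \<rho> (card \<Theta>)} = ?good"
    by (simp add: Y_def B_def d_def k_def)
  show ?thesis
  proof (cases "\<Theta> = {}")
    case True
    then show ?thesis unfolding goal_eq using rho by (simp add: M.prob_space)
  next
    case False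
    have k1: "k \<ge> 1" using False fin by (simp add: k_def Suc_le_eq card_gt_0_iff)
    have lnpos: "ln (real k / \<rho>) > 0" using k1 rho by (simp add: ln_gt_zero_iff)
    have BC: "B = sqrt (real d) * C * sqrt (1/2 * ln (real k / \<rho>))"
    proof -
      have "real d + sqrt (real d) = sqrt (real d) * (1 + sqrt (real d))"
        by (simp add: algebra_simps)
      then show ?thesis by (simp add: B_def dro_bound_def C_def e_def)
    qed
    have Bpos: "B > 0" using BC Cpos d1 lnpos by simp
    have rv: "X i \<in> measurable M S" if "i < d" for i
      using indep that unfolding M.indep_vars_def d_def by auto
    obtain \<omega>0 where \<omega>0: "\<omega>0 \<in> space M" using M.not_empty by blast
    define s0 where "s0 = X 0 \<omega>0"
    have s0: "s0 \<in> space S" using rv[of 0] d1 \<omega>0 by (simp add: s0_def measurable_space)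
    define N where "N i = (if i < d then distr M S (X i) else return S s0)" for i
    have Nprob: "prob_space (N i)" for i
      by (simp add: N_def M.prob_space_distr rv prob_space_return s0)
    have spN: "space (N i) = space S" if "i < d" for i using that by (simp add: N_def)
    have Ym: "Y \<in> measurable M (PiM {..<d} (\<lambda>_. S))"
      unfolding Y_def by (rule measurable_restrict) (simp add: rv)
    have distr_eq: "distr M (PiM {..<d} (\<lambda>_. S)) Y = PiM {..<d} N"
    proof -
      have "distr M (PiM {..<d} (\<lambda>_. S)) Y = PiM {..<d} (\<lambda>i. distr M S (X i))"
      proof -
        have ne: "{..<d} \<noteq> {}" using d1 lessThan_empty_iff by (metis not_one_le_zero)
        have Yeq: "Y = (\<lambda>\<omega>. \<lambda>i\<in>{..<d}. X i \<omega>)" by (simp add: Y_def fun_eq_iff)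
        show ?thesis unfolding Yeq
          using M.indep_vars_iff_distr_eq_PiM'[where I="{..<d}" and M'="\<lambda>_. S" and X=X, OF ne] indep rv
          by (simp add: d_def)
      qed
      also have "\<dots> = PiM {..<d} N" by (rule PiM_cong) (simp_all add: N_def)
      finally show ?thesis .
    qed
    define P where "P = PiM {..<d} N"
    have bad: "M.prob {\<omega> \<in> space M. f \<theta> (Y \<omega>) \<le> L_DRO_smooth G (Emb \<theta>) \<alpha> u - B} \<le> \<rho> / real k"
      if th: "\<theta> \<in> \<Theta>" for \<theta>
    proof -
      have FmS: "f \<theta> \<in> borel_measurable (PiM {..<d} (\<lambda>_. S))" using meas th by (simp add: d_def)
      have Fm: "f \<theta> \<in> borel_measurable P"
        using FmS unfolding P_def distr_eq[symmetric] by simp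
      have maxC: "Max ((\<lambda>v. Pstar G (Emb \<theta>) \<alpha> u v * \<bar>hfun G (Emb \<theta>) u v\<bar>) ` nbrs G u) \<le> C"
      proof (subst Max_le_iff)
        show "\<forall>a\<in>(\<lambda>v. Pstar G (Emb \<theta>) \<alpha> u v * \<bar>hfun G (Emb \<theta>) u v\<bar>) ` nbrs G u. a \<le> C"
        proof
          fix a assume "a \<in> (\<lambda>v. Pstar G (Emb \<theta>) \<alpha> u v * \<bar>hfun G (Emb \<theta>) u v\<bar>) ` nbrs G u"
          then obtain v where v: "v \<in> nbrs G u" and a: "a = Pstar G (Emb \<theta>) \<alpha> u v * \<bar>hfun G (Emb \<theta>) u v\<bar>" by auto
          have nrm: "\<And>w. norm (Emb \<theta> w) = 1" using unit th by auto
          have gb: "\<And>w. w \<in> nbrs G u \<Longrightarrow> \<bar>gfun G (Emb \<theta>) u w\<bar> \<le> 1"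
          proof -
            fix w
            have "\<bar>gfun G (Emb \<theta>) u w\<bar> \<le> 1 / sqrt (real (deg G u))"
              by (rule g_abs_bound[OF nrm nrm degs degs])
            also have "\<dots> \<le> 1" using degs[of u] by simp
            finally show "\<bar>gfun G (Emb \<theta>) u w\<bar> \<le> 1" .
          qed
          have p1: "Pstar G (Emb \<theta>) \<alpha> u v \<le> e / (real d - 1 + e)"
            using pstar_bound[OF finA v alpha degs gb] by (simp add: e_def d_def)
          have p0: "Pstar G (Emb \<theta>) \<alpha> u v \<ge> 0"
            using opt th v unfolding kl_ball_maximizer_def is_dist_def by auto
          have h1: "\<bar>hfun G (Emb \<theta>) u v\<bar> \<le> 1 + sqrt (real d)"
            using h_abs_bound[of "Emb \<theta>" u v G] nrm degs by (simp add: d_def)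
          show "a \<le> C" unfolding a C_def using p0 p1 h1 by (intro mult_mono) auto
        qed
      qed (use finA Ane in auto)
      have bd: "bdd_diff d (\<lambda>i. space (N i)) (f \<theta>) C"
      proof -
        have PE: "PiE {..<d} (\<lambda>i. space (N i)) = PiE {..<d} (\<lambda>_. space S)"
          by (rule PiE_cong) (simp add: spN)
        show ?thesis unfolding bdd_diff_def PE
          using bdiff th maxC unfolding d_def by (meson order_trans)
      qed
      have EF: "(\<integral>x. f \<theta> x \<partial>P) = L_DRO_smooth G (Emb \<theta>) \<alpha> u"
        unfolding P_def distr_eq[symmetric] using integral_distr[OF Ym FmS] unbiased th
        by (simp add: Y_def d_def)
      have tail: "measure P {x \<in> space P. f \<theta> x \<le> (\<integral>x. f \<theta> x \<partial>P) - B}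
            \<le> exp (-2 * B\<^sup>2 / (real d * C\<^sup>2))"
        unfolding P_def by (rule mcd_tail[OF Nprob Fm[unfolded P_def] bd Bpos _ Cpos]) (use d1 in simp)
      have "exp (-2 * B\<^sup>2 / (real d * C\<^sup>2)) = exp (- ln (real k / \<rho>))"
        using d1 Cpos lnpos by (simp add: BC power_mult_distrib field_simps)
      also have "\<dots> = \<rho> / real k" using k1 rho by (simp add: exp_minus ln_div exp_diff)
      finally have tail': "measure P {x \<in> space P. f \<theta> x \<le> L_DRO_smooth G (Emb \<theta>) \<alpha> u - B} \<le> \<rho> / real k"
        using tail EF by simp
      have setm: "{x \<in> space P. f \<theta> x \<le> L_DRO_smooth G (Emb \<theta>) \<alpha> u - B} \<in> sets P"
        using Fm by measurable
      have "measure P {x \<in> space P. f \<theta> x \<le> L_DRO_smooth G (Emb \<theta>) \<alpha> u - B}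
          = M.prob (Y -` {x \<in> space P. f \<theta> x \<le> L_DRO_smooth G (Emb \<theta>) \<alpha> u - B} \<inter> space M)"
        unfolding P_def distr_eq[symmetric]
        by (rule measure_distr[OF Ym]) (use setm in \<open>simp add: P_def distr_eq[symmetric]\<close>)
      also have "Y -` {x \<in> space P. f \<theta> x \<le> L_DRO_smooth G (Emb \<theta>) \<alpha> u - B} \<inter> space M
          = {\<omega> \<in> space M. f \<theta> (Y \<omega>) \<le> L_DRO_smooth G (Emb \<theta>) \<alpha> u - B}"
        using measurable_space[OF Ym] by (auto simp: P_def distr_eq[symmetric])
      finally show ?thesis using tail' by simp
    qed
    define Bad where "Bad \<theta> = {\<omega> \<in> space M. \<not> (L_ideal G (Emb \<theta>) Pid u \<le> f \<theta> (Y \<omega>) + B)}" for \<theta>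
    have Bad_sets: "Bad \<theta> \<in> M.events" if th: "\<theta> \<in> \<Theta>" for \<theta>
    proof -
      have "f \<theta> \<in> borel_measurable (PiM {..<d} (\<lambda>_. S))" using meas th by (simp add: d_def)
      then have "(\<lambda>\<omega>. f \<theta> (Y \<omega>)) \<in> borel_measurable M" using Ym by measurable
      then show ?thesis unfolding Bad_def by measurable
    qed
    have Bad_le: "M.prob (Bad \<theta>) \<le> \<rho> / real k" if th: "\<theta> \<in> \<Theta>" for \<theta>
    proof -
      have Lle: "L_ideal G (Emb \<theta>) Pid u \<le> L_DRO_smooth G (Emb \<theta>) \<alpha> u"
        using opt th ideal unfolding kl_ball_maximizer_def L_ideal_def L_DRO_smooth_def by blast
      have "f \<theta> \<in> borel_measurable (PiM {..<d} (\<lambda>_. S))" using meas th by (simp add: d_def)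
      then have "(\<lambda>\<omega>. f \<theta> (Y \<omega>)) \<in> borel_measurable M" using Ym by measurable
      then have "{\<omega> \<in> space M. f \<theta> (Y \<omega>) \<le> L_DRO_smooth G (Emb \<theta>) \<alpha> u - B} \<in> M.events" by measurable
      moreover have "Bad \<theta> \<subseteq> {\<omega> \<in> space M. f \<theta> (Y \<omega>) \<le> L_DRO_smooth G (Emb \<theta>) \<alpha> u - B}"
        using Lle by (auto simp: Bad_def)
      ultimately have "M.prob (Bad \<theta>) \<le> M.prob {\<omega> \<in> space M. f \<theta> (Y \<omega>) \<le> L_DRO_smooth G (Emb \<theta>) \<alpha> u - B}"
        by (intro M.finite_measure_mono)
      then show ?thesis using bad[OF th] by linarith
    qed
    have U: "(\<Union>\<theta>\<in>\<Theta>. Bad \<theta>) \<in> M.events" using Bad_sets fin by auto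
    have good_eq: "?good = space M - (\<Union>\<theta>\<in>\<Theta>. Bad \<theta>)" by (auto simp: Bad_def)
    have "M.prob (\<Union>\<theta>\<in>\<Theta>. Bad \<theta>) \<le> (\<Sum>\<theta>\<in>\<Theta>. M.prob (Bad \<theta>))"
      by (rule M.finite_measure_subadditive_finite) (use fin Bad_sets in auto)
    also have "\<dots> \<le> (\<Sum>\<theta>\<in>\<Theta>. \<rho> / real k)" by (intro sum_mono Bad_le)
    also have "\<dots> = \<rho>" using k1 by (simp add: k_def)
    finally have "M.prob (\<Union>\<theta>\<in>\<Theta>. Bad \<theta>) \<le> \<rho>" .
    then show ?thesis unfolding goal_eq good_eq using M.prob_compl[OF U] by simp
  qed
qed

end
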